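(* Let $\widehat{T}(n)=\max_{w\in\mathcal{W}_n}\mathbb{E}(T\mid w_0=w)$ denote the worst expected convergence time of the cooling process on configurations of length $n$. Then $\widehat{T}(n)=O(n^3)$.
   Context: A configuration of length $n$ is a word $w=w_1\cdots w_n$ over the alphabet $\{1,2\}$ with $|w|_1=|w|_2$ (as many letters $1$ as letters $2$); $\mathcal{W}_n$ denotes the set of configurations of length $n$. A flip at position $1\le i<n$ on $w$ exchanges $w_i$ and $w_{i+1}$, provided $w_i\ne w_{i+1}$. The configuration $w$ has a mismatch at position $i$ if $w_i=w_{i+1}$; $E(w)$ denotes the total number of mismatches of $w$. The cooling process is the Markov chain $(w_t)_{t\ge0}$ on $\mathcal{W}_n$ started at $w_0$ and defined by $w_{t+1}=w_t$ if $E(w_t)=0$, and otherwise $w_{t+1}$ is obtained from $w_t$ by performing a flip chosen uniformly at random among the flips on $w_t$ that do not increase the number of mismatches (i.e. flips producing $w'$ with $E(w')\le E(w_t)$). The convergence time is $T=\min\{t\ge0 : E(w_t)=0\}$. *)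

theory Defs
  imports "HOL-Probability.Probability"
begin

text \<open>Configurations are lists over the alphabet {1,2} (encoded as naturals),
  positions are 0-indexed: position i of the list is letter w_(i+1) of the paper.\<close>

definition configs :: "nat \<Rightarrow> nat list set" where
  "configs n = {w. length w = n \<and> set w \<subseteq> {1,2} \<and>
                   count_list w 1 = count_list w 2}"

definition mismatches :: "nat list \<Rightarrow> nat" where
  "mismatches w = card {i. Suc i < length w \<and> w ! i = w ! Suc i}"

definition flip :: "nat list \<Rightarrow> nat \<Rightarrow> nat list" where
  "flip w i = w[i := w ! Suc i, Suc i := w ! i]"

definition allowed_flips :: "nat list \<Rightarrow> nat set" where
  "allowed_flips w = {i. Suc i < length w \<and> w ! i \<noteq> w ! Suc i \<and>
                         mismatches (flip w i) \<le> mismatches w}"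

definition cool_step :: "nat list \<Rightarrow> nat list pmf" where
  "cool_step w = (if mismatches w = 0 then return_pmf w
                  else map_pmf (flip w) (pmf_of_set (allowed_flips w)))"

fun traj :: "nat \<Rightarrow> nat list \<Rightarrow> nat list list pmf" where
  "traj 0 w = return_pmf [w]"
| "traj (Suc t) w = bind_pmf (traj t w) (\<lambda>p. map_pmf (\<lambda>v. p @ [v]) (cool_step (last p)))"

text \<open>P(T > t | w_0 = w): all of w_0, ..., w_t have a mismatch.\<close>
definition surv :: "nat list \<Rightarrow> nat \<Rightarrow> real" where
  "surv w t = measure_pmf.prob (traj t w) {p. \<forall>v\<in>set p. mismatches v \<noteq> 0}"

text \<open>E(T | w_0 = w) = sum over t of P(T > t), as an extended nonnegative real
  (possibly infinite).\<close>
definition exp_conv_time :: "nat list \<Rightarrow> ennreal" where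
  "exp_conv_time w = (\<Sum>t. ennreal (surv w t))"

end

theory Submission
  imports Defs
begin


definition cv :: "nat \<Rightarrow> int" where "cv x = (if x = 1 then 1 else -1)"
definition hh :: "nat list \<Rightarrow> nat \<Rightarrow> int" where "hh w k = (\<Sum>j<k. cv (w!j))"
definition wl :: "nat list \<Rightarrow> nat \<Rightarrow> bool" where
  "wl w k \<longleftrightarrow> 0 < k \<and> k < length w \<and> w!(k-1) = w!k"
definition qq :: "int \<Rightarrow> int \<Rightarrow> int \<Rightarrow> int" where
  "qq n t k = (if 0 < t then -(k^2) else if t = 0 then k*(n-k) else -((n-k)^2))"
definition pp :: "int \<Rightarrow> int \<Rightarrow> int \<Rightarrow> int" where
  "pp n t k = (if 0 < t then 2*k else if t = 0 then 2*k - n else 2*k - 2*n)"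
definition tt :: "nat list \<Rightarrow> nat \<Rightarrow> int" where "tt w k = cv (w!k) * hh w k"
definition trm :: "nat list \<Rightarrow> nat \<Rightarrow> int" where
  "trm w k = 2 * (int (length w))^2 + qq (int (length w)) (tt w k) (int k)"
definition Phi :: "nat list \<Rightarrow> int" where
  "Phi w = (\<Sum>k<length w. if wl w k then trm w k else 0)"

lemma length_flip[simp]: "length (flip w i) = length w"
  by (simp add: flip_def)

lemma nth_flip:
  assumes "Suc i < length w"
  shows "flip w i ! j = (if j = i then w!Suc i else if j = Suc i then w!i else w!j)"
  using assms by (auto simp: flip_def nth_list_update)

lemma hh_Suc: "hh w (Suc k) = hh w k + cv (w!k)"
  by (simp add: hh_def)

lemma hh_flip:
  assumes "Suc i < length w" "k \<noteq> Suc i"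
  shows "hh (flip w i) k = hh w k"
proof (cases "k \<le> i")
  case True
  then show ?thesis unfolding hh_def using assms by (intro sum.cong) (auto simp: nth_flip)
next
  case False
  then obtain m where k: "k = Suc (Suc i) + m" using assms(2)
    by (metis add_Suc_right add_Suc_shift less_Suc_eq not_le_imp_less less_iff_Suc_add)
  have base: "hh (flip w i) i = hh w i" unfolding hh_def using assms by (intro sum.cong) (auto simp: nth_flip)
  have "hh (flip w i) (Suc (Suc i) + m) = hh w (Suc (Suc i) + m)"
  proof (induction m)
    case 0
    then show ?case using base assms by (simp add: hh_Suc nth_flip)
  next
    case (Suc m)
    then show ?case using assms by (simp add: hh_Suc nth_flip)
  qed
  then show ?thesis using k by simp
qed

lemma local_sum:
  fixes F F' :: "nat \<Rightarrow> int"
  assumes "Suc i < n" "\<And>k. k < n \<Longrightarrow> k \<noteq> i \<Longrightarrow> k \<noteq> Suc (Suc i) \<Longrightarrow> F' k = F k"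
  shows "(\<Sum>k<n. F' k) = (\<Sum>k<n. F k) + (F' i - F i)
          + (if Suc (Suc i) < n then F' (Suc (Suc i)) - F (Suc (Suc i)) else 0)"
proof -
  have "(\<Sum>k<n. F' k) - (\<Sum>k<n. F k) = (\<Sum>k<n. F' k - F k)"
    by (simp add: sum_subtractf)
  also have "\<dots> = (\<Sum>k\<in>{..<n} \<inter> {i, Suc (Suc i)}. F' k - F k)"
  proof (rule sum.mono_neutral_right)
    show "\<forall>k\<in>{..<n} - {..<n} \<inter> {i, Suc (Suc i)}. F' k - F k = 0"
      using assms(2) by auto
  qed auto
  also have "\<dots> = (F' i - F i) + (if Suc (Suc i) < n then F' (Suc (Suc i)) - F (Suc (Suc i)) else 0)"
  proof (cases "Suc (Suc i) < n")
    case True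
    then have "{..<n} \<inter> {i, Suc (Suc i)} = {i, Suc (Suc i)}" by auto
    then show ?thesis using True by simp
  next
    case False
    then have "{..<n} \<inter> {i, Suc (Suc i)} = {i}" using assms by auto
    then show ?thesis using False by simp
  qed
  finally show ?thesis by simp
qed

lemma wl_flip_far:
  assumes "Suc i < length w" "k \<noteq> i" "k \<noteq> Suc i" "k \<noteq> Suc (Suc i)"
  shows "wl (flip w i) k = wl w k"
  using assms unfolding wl_def by (auto simp: nth_flip)

lemma wl_flip_mid:
  assumes "Suc i < length w" "w!i \<noteq> w!Suc i"
  shows "\<not> wl (flip w i) (Suc i)" "\<not> wl w (Suc i)"
  using assms unfolding wl_def by (auto simp: nth_flip)

lemma local_wall_sum:
  fixes g :: "nat list \<Rightarrow> nat \<Rightarrow> int"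
  assumes "Suc i < length w" "w!i \<noteq> w!Suc i"
    and "\<And>k. k \<noteq> i \<Longrightarrow> k \<noteq> Suc i \<Longrightarrow> g (flip w i) k = g w k"
  shows "(\<Sum>k<length w. if wl (flip w i) k then g (flip w i) k else 0)
       = (\<Sum>k<length w. if wl w k then g w k else 0)
         + ((if wl (flip w i) i then g (flip w i) i else 0) - (if wl w i then g w i else 0))
         + (if Suc (Suc i) < length w then
              (if wl (flip w i) (Suc (Suc i)) then g w (Suc (Suc i)) else 0)
              - (if wl w (Suc (Suc i)) then g w (Suc (Suc i)) else 0) else 0)"
proof -
  have "(\<Sum>k<length w. if wl (flip w i) k then g (flip w i) k else 0)
       = (\<Sum>k<length w. if wl w k then g w k else 0)
         + ((if wl (flip w i) i then g (flip w i) i else 0) - (if wl w i then g w i else 0))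
         + (if Suc (Suc i) < length w then
              (if wl (flip w i) (Suc (Suc i)) then g (flip w i) (Suc (Suc i)) else 0)
              - (if wl w (Suc (Suc i)) then g w (Suc (Suc i)) else 0) else 0)"
  proof (rule local_sum)
    show "Suc i < length w" by fact
    fix k assume k: "k < length w" "k \<noteq> i" "k \<noteq> Suc (Suc i)"
    show "(if wl (flip w i) k then g (flip w i) k else 0) = (if wl w k then g w k else 0)"
    proof (cases "k = Suc i")
      case True then show ?thesis using wl_flip_mid[OF assms(1,2)] by simp
    next
      case False then show ?thesis using wl_flip_far[OF assms(1)] k assms(3) by simp
    qed
  qed
  then show ?thesis using assms(3)[of "Suc (Suc i)"] by simp
qed



lemma mismatches_sum: "int (mismatches w) = (\<Sum>k<length w. if wl w k then 1 else 0)"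
proof -
  have e: "{k\<in>{..<length w}. wl w k} = Suc ` {i. Suc i < length w \<and> w!i = w!Suc i}"
  proof (rule set_eqI, rule iffI)
    fix k assume "k \<in> {k\<in>{..<length w}. wl w k}"
    then have "0 < k" "k < length w" "w!(k-1) = w!k" by (auto simp: wl_def)
    then show "k \<in> Suc ` {i. Suc i < length w \<and> w!i = w!Suc i}"
      by (intro image_eqI[of _ _ "k-1"]) auto
  qed (auto simp: wl_def)
  have "mismatches w = card {k\<in>{..<length w}. wl w k}"
    unfolding mismatches_def e by (simp add: card_image)
  moreover have "(\<Sum>k<length w. if wl w k then 1 else 0) = (\<Sum>k\<in>{k\<in>{..<length w}. wl w k}. (1::int))"
    by (rule sum.inter_filter[symmetric]) simp
  ultimately show ?thesis by simp
qed

lemma configs_bin: "w \<in> configs n \<Longrightarrow> j < length w \<Longrightarrow> w!j = 1 \<or> w!j = 2"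
  unfolding configs_def using nth_mem by fastforce

lemma bin3:
  assumes "w \<in> configs n" "a < length w" "b < length w" "c < length w" "w!a \<noteq> w!b"
  shows "w!c = w!a \<or> w!c = w!b"
  using configs_bin[OF assms(1)] assms(2-5) by metis

lemma cv_sq: "cv x * cv x = 1" by (simp add: cv_def)

lemma cv_opp: "x \<in> {1,2} \<Longrightarrow> y \<in> {1,2} \<Longrightarrow> x \<noteq> y \<Longrightarrow> cv x + cv y = 0"
  by (auto simp: cv_def)

lemma sum_list_cv: "set w \<subseteq> {1,2} \<Longrightarrow> sum_list (map cv w) = int (count_list w 1) - int (count_list w 2)"
  by (induction w) (auto simp: cv_def)

lemma hh_len: assumes "w \<in> configs n" shows "hh w (length w) = 0"
proof -
  have "hh w (length w) = sum_list (map cv w)"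
    unfolding hh_def by (simp add: sum_list_sum_nth atLeast0LessThan)
  also have "\<dots> = 0" using assms sum_list_cv[of w] unfolding configs_def by simp
  finally show ?thesis .
qed

lemma flip_configs:
  assumes "w \<in> configs n" "Suc i < length w"
  shows "flip w i \<in> configs n"
proof -
  have m: "mset (flip w i) = mset w"
    unfolding flip_def using assms(2) by (intro mset_swap) auto
  then have "set (flip w i) = set w" by (metis set_mset_mset)
  moreover have "count_list (flip w i) x = count_list w x" for x
    using m by (metis count_mset)
  ultimately show ?thesis using assms(1) unfolding configs_def by simp
qed



lemma wl_flip_i:
  assumes "w \<in> configs n" "Suc i < length w" "w!i \<noteq> w!Suc i"
  shows "wl (flip w i) i \<longleftrightarrow> 0 < i \<and> \<not> wl w i"
proof (cases "0 < i")
  case True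
  have d: "w!(i-1) = w!i \<or> w!(i-1) = w!Suc i"
    by (rule bin3[OF assms(1)]) (use assms True in arith)+
  have ne: "i - 1 \<noteq> i" "i - 1 \<noteq> Suc i" using True by arith+
  have f1: "flip w i ! (i-1) = w!(i-1)" using ne assms(2) by (simp add: nth_flip)
  have f2: "flip w i ! i = w!Suc i" using True assms(2) by (simp add: nth_flip)
  have "wl (flip w i) i \<longleftrightarrow> w!(i-1) = w!Suc i" unfolding wl_def using f1 f2 True assms(2) by simp
  moreover have "wl w i \<longleftrightarrow> w!(i-1) = w!i" unfolding wl_def using True assms(2) by simp
  ultimately show ?thesis using d True assms(3) by metis
qed (simp add: wl_def)

lemma wl_flip_i2:
  assumes "w \<in> configs n" "Suc i < length w" "w!i \<noteq> w!Suc i"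
  shows "wl (flip w i) (Suc (Suc i)) \<longleftrightarrow> Suc (Suc i) < length w \<and> \<not> wl w (Suc (Suc i))"
proof (cases "Suc (Suc i) < length w")
  case True
  have d: "w!(Suc (Suc i)) = w!i \<or> w!(Suc (Suc i)) = w!Suc i"
    by (rule bin3[OF assms(1)]) (use assms True in arith)+
  have f1: "flip w i ! Suc i = w!i" using assms(2) by (simp add: nth_flip)
  have f2: "flip w i ! Suc (Suc i) = w!Suc (Suc i)" using assms(2) by (simp add: nth_flip)
  have "wl (flip w i) (Suc (Suc i)) \<longleftrightarrow> w!i = w!Suc (Suc i)" unfolding wl_def using f1 f2 True by simp
  moreover have "wl w (Suc (Suc i)) \<longleftrightarrow> w!Suc i = w!Suc (Suc i)" unfolding wl_def using True by simp
  ultimately show ?thesis using d True assms(3) by metis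
qed (simp add: wl_def)


lemma dE:
  assumes "w \<in> configs n" "Suc i < length w" "w!i \<noteq> w!Suc i"
  shows "int (mismatches (flip w i)) = int (mismatches w)
     + (if 0 < i then (if wl w i then -1 else 1) else 0)
     + (if Suc (Suc i) < length w then (if wl w (Suc (Suc i)) then -1 else 1) else 0)"
proof -
  have "int (mismatches (flip w i)) = (\<Sum>k<length w. if wl (flip w i) k then (\<lambda>v k. 1::int) (flip w i) k else 0)"
    using mismatches_sum[of "flip w i"] by simp
  also have "\<dots> = (\<Sum>k<length w. if wl w k then (\<lambda>v k. 1::int) w k else 0)
         + ((if wl (flip w i) i then 1 else 0) - (if wl w i then 1 else 0))
         + (if Suc (Suc i) < length w then
              (if wl (flip w i) (Suc (Suc i)) then 1 else 0)
              - (if wl w (Suc (Suc i)) then 1 else 0) else 0)"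
    by (rule local_wall_sum[OF assms(2,3)]) simp
  also have "\<dots> = int (mismatches w)
     + (if 0 < i then (if wl w i then -1 else 1) else 0)
     + (if Suc (Suc i) < length w then (if wl w (Suc (Suc i)) then -1 else 1) else 0)"
    unfolding mismatches_sum[of w] wl_flip_i[OF assms] wl_flip_i2[OF assms]
    by (cases "0 < i"; cases "wl w i"; cases "Suc (Suc i) < length w"; cases "wl w (Suc (Suc i))")
       (simp_all add: wl_def)
  finally show ?thesis .
qed

lemma trm_flip:
  assumes "Suc i < length w" "k \<noteq> i" "k \<noteq> Suc i"
  shows "trm (flip w i) k = trm w k"
  using assms hh_flip[OF assms(1)] by (simp add: trm_def tt_def nth_flip)

lemma dPhi:
  assumes "w \<in> configs n" "Suc i < length w" "w!i \<noteq> w!Suc i"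
  shows "Phi (flip w i) = Phi w
     + ((if 0 < i \<and> \<not> wl w i then trm (flip w i) i else 0) - (if wl w i then trm w i else 0))
     + (if Suc (Suc i) < length w then
          (if wl w (Suc (Suc i)) then - trm w (Suc (Suc i)) else trm w (Suc (Suc i))) else 0)"
proof -
  have "Phi (flip w i) = (\<Sum>k<length w. if wl w k then trm w k else 0)
         + ((if wl (flip w i) i then trm (flip w i) i else 0) - (if wl w i then trm w i else 0))
         + (if Suc (Suc i) < length w then
              (if wl (flip w i) (Suc (Suc i)) then trm w (Suc (Suc i)) else 0)
              - (if wl w (Suc (Suc i)) then trm w (Suc (Suc i)) else 0) else 0)"
    unfolding Phi_def length_flip
    by (rule local_wall_sum[where g=trm, OF assms(2,3)]) (rule trm_flip[OF assms(2)])
  also have "(\<Sum>k<length w. if wl w k then trm w k else 0) = Phi w" by (simp only: Phi_def)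
  finally have e: "Phi (flip w i) = Phi w
         + ((if wl (flip w i) i then trm (flip w i) i else 0) - (if wl w i then trm w i else 0))
         + (if Suc (Suc i) < length w then
              (if wl (flip w i) (Suc (Suc i)) then trm w (Suc (Suc i)) else 0)
              - (if wl w (Suc (Suc i)) then trm w (Suc (Suc i)) else 0) else 0)" .
  show ?thesis
    unfolding e wl_flip_i[OF assms] wl_flip_i2[OF assms]
    by (cases "wl w (Suc (Suc i))"; cases "Suc (Suc i) < length w") (simp_all only: if_True if_False simp_thms)
qed



definition ZR :: "nat list \<Rightarrow> nat \<Rightarrow> bool" where
  "ZR w i \<longleftrightarrow> Suc i < length w \<and> w!i \<noteq> w!Suc i \<and> wl w i \<and> Suc (Suc i) < length w \<and> \<not> wl w (Suc (Suc i))"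
definition ZL :: "nat list \<Rightarrow> nat \<Rightarrow> bool" where
  "ZL w i \<longleftrightarrow> Suc i < length w \<and> w!i \<noteq> w!Suc i \<and> 0 < i \<and> \<not> wl w i \<and> wl w (Suc (Suc i))"
definition DC :: "nat list \<Rightarrow> nat \<Rightarrow> bool" where
  "DC w i \<longleftrightarrow> Suc i < length w \<and> w!i \<noteq> w!Suc i \<and>
     ((wl w i \<and> wl w (Suc (Suc i))) \<or> (i = 0 \<and> wl w (Suc (Suc i))) \<or> (wl w i \<and> \<not> Suc (Suc i) < length w))"
definition PP :: "nat list \<Rightarrow> nat \<Rightarrow> int" where
  "PP w k = pp (int (length w)) (tt w k) (int k)"

lemma allowed_iff:
  assumes "w \<in> configs n" "3 \<le> length w"
  shows "i \<in> allowed_flips w \<longleftrightarrow> ZR w i \<or> ZL w i \<or> DC w i"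
proof (cases "Suc i < length w \<and> w!i \<noteq> w!Suc i")
  case False
  then show ?thesis unfolding allowed_flips_def ZR_def ZL_def DC_def by blast
next
  case True
  then have b: "Suc i < length w" "w!i \<noteq> w!Suc i" by auto
  have "i \<in> allowed_flips w \<longleftrightarrow> int (mismatches (flip w i)) \<le> int (mismatches w)"
    unfolding allowed_flips_def using b by simp
  also have "\<dots> \<longleftrightarrow> (if 0 < i then (if wl w i then -1 else 1) else 0)
     + (if Suc (Suc i) < length w then (if wl w (Suc (Suc i)) then -1 else 1) else 0) \<le> (0::int)"
    unfolding dE[OF assms(1) b] by simp
  also have "\<dots> \<longleftrightarrow> ZR w i \<or> ZL w i \<or> DC w i"
    unfolding ZR_def ZL_def DC_def using b assms(2)
    by (cases "0 < i"; cases "wl w i"; cases "Suc (Suc i) < length w"; cases "wl w (Suc (Suc i))")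
       (simp_all add: wl_def)
  finally show ?thesis .
qed

lemma qq_step: "qq n t (k+2) - qq n t k = -2 * pp n t k - 4"
  unfolding qq_def pp_def by (simp add: power2_eq_square algebra_simps)

lemma qq_bounds:
  assumes "0 \<le> k" "k \<le> n"
  shows "-(n^2) \<le> qq n t k \<and> qq n t k \<le> n^2"
proof -
  have a: "k^2 \<le> n^2" "(n-k)^2 \<le> n^2" using assms by (auto intro!: power_mono)
  have b: "0 \<le> k*(n-k)" "k*(n-k) \<le> n*n" using assms by (auto intro!: mult_mono)
  have c: "0 \<le> k^2" "0 \<le> (n-k)^2" "0 \<le> n^2" by simp_all
  have d: "k*(n-k) \<le> n^2" using b by (simp add: power2_eq_square)
  show ?thesis unfolding qq_def using a b c d by (smt (verit))
qed

lemma pp_bounds: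
  assumes "0 \<le> k" "k \<le> n"
  shows "-2*n \<le> pp n t k \<and> pp n t k \<le> 2*n"
  using assms unfolding pp_def by auto

lemma pp_mono: "0 \<le> n \<Longrightarrow> pp n t k \<le> pp n (t+1) (k+1)"
  unfolding pp_def by auto

lemma trm_lb: assumes "k \<le> length w" shows "(int (length w))^2 \<le> trm w k"
  using qq_bounds[of "int k" "int (length w)" "tt w k"] assms unfolding trm_def by simp

lemma trm_ub: assumes "k \<le> length w" shows "trm w k \<le> 3 * (int (length w))^2"
  using qq_bounds[of "int k" "int (length w)" "tt w k"] assms unfolding trm_def by simp

lemma hh_bd:
  assumes "w \<in> configs n" "Suc i < length w" "w!i \<noteq> w!Suc i"
  shows "hh w (Suc (Suc i)) = hh w i"
proof -
  have "w!i \<in> {1,2}" "w!Suc i \<in> {1,2}" using configs_bin[OF assms(1)] assms(2) by auto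
  then have "cv (w!i) + cv (w!Suc i) = 0" using cv_opp assms(3) by blast
  then show ?thesis by (simp add: hh_Suc)
qed

lemma dPhi_ZR:
  assumes "w \<in> configs n" "ZR w i"
  shows "Phi (flip w i) - Phi w = -2 * PP w i - 4"
proof -
  have b: "Suc i < length w" "w!i \<noteq> w!Suc i" "wl w i" "Suc (Suc i) < length w" "\<not> wl w (Suc (Suc i))"
    using assms(2) unfolding ZR_def by auto
  have i0: "0 < i" using b(3) unfolding wl_def by simp
  have "w!(Suc (Suc i)) = w!i \<or> w!(Suc (Suc i)) = w!Suc i"
    by (rule bin3[OF assms(1)]) (use b in arith)+
  moreover have "w!(Suc (Suc i)) \<noteq> w!Suc i" using b(4,5) unfolding wl_def by simp
  ultimately have l: "w!(Suc (Suc i)) = w!i" by blast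
  have t: "tt w (Suc (Suc i)) = tt w i" unfolding tt_def l hh_bd[OF assms(1) b(1,2)] ..
  have "Phi (flip w i) - Phi w = trm w (Suc (Suc i)) - trm w i"
    using dPhi[OF assms(1) b(1,2)] b by simp
  also have "\<dots> = qq (int (length w)) (tt w i) (int i + 2) - qq (int (length w)) (tt w i) (int i)"
    unfolding trm_def t by (simp add: add.commute)
  also have "\<dots> = -2 * PP w i - 4" unfolding PP_def by (rule qq_step)
  finally show ?thesis .
qed

lemma dPhi_ZL:
  assumes "w \<in> configs n" "ZL w i"
  shows "Phi (flip w i) - Phi w = 2 * PP w (Suc (Suc i)) - 4"
proof -
  have b: "Suc i < length w" "w!i \<noteq> w!Suc i" "0 < i" "\<not> wl w i" "wl w (Suc (Suc i))"
    using assms(2) unfolding ZL_def by auto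
  have b4: "Suc (Suc i) < length w" using b(5) unfolding wl_def by simp
  have l: "w!(Suc (Suc i)) = w!Suc i" using b(5) unfolding wl_def by simp
  have t: "cv (w ! Suc i) * hh w i = tt w (Suc (Suc i))" unfolding tt_def l hh_bd[OF assms(1) b(1,2)] ..
  have ttf: "tt (flip w i) i = tt w (Suc (Suc i))"
      unfolding tt_def[of "flip w i"] hh_flip[OF b(1) n_not_Suc_n] t[symmetric] using b(1) by (simp add: nth_flip)
  have "Phi (flip w i) - Phi w = trm (flip w i) i - trm w (Suc (Suc i))"
    using dPhi[OF assms(1) b(1,2)] b b4 by simp
  also have "\<dots> = qq (int (length w)) (tt w (Suc (Suc i))) (int i) - qq (int (length w)) (tt w (Suc (Suc i))) (int i + 2)"
    unfolding trm_def ttf by (simp add: add.commute)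
  also have "\<dots> = 2 * PP w (Suc (Suc i)) - 4"
    using qq_step[of "int (length w)" "tt w (Suc (Suc i))" "int i"]
    unfolding PP_def pp_def by auto
  finally show ?thesis .
qed

lemma dPhi_DC:
  assumes "w \<in> configs n" "DC w i"
  shows "Phi (flip w i) - Phi w \<le> - ((int (length w))^2)"
proof -
  have b: "Suc i < length w" "w!i \<noteq> w!Suc i" using assms(2) unfolding DC_def by auto
  have l1: "(int (length w))^2 \<le> trm w i" using b by (intro trm_lb) simp
  have l2: "(int (length w))^2 \<le> trm w (Suc (Suc i))" if "wl w (Suc (Suc i))"
    using that by (intro trm_lb) (simp add: wl_def)
  have l0: "0 \<le> trm w k" if "k \<le> length w" for k using trm_lb[OF that] by (smt (verit) zero_le_power2)
  have w0: "0 < i" if "wl w i" using that unfolding wl_def by simp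
  have w2: "Suc (Suc i) < length w" if "wl w (Suc (Suc i))" using that unfolding wl_def by simp
  have e: "Phi (flip w i) - Phi w = ((if 0 < i \<and> \<not> wl w i then trm (flip w i) i else 0) - (if wl w i then trm w i else 0))
     + (if Suc (Suc i) < length w then
          (if wl w (Suc (Suc i)) then - trm w (Suc (Suc i)) else trm w (Suc (Suc i))) else 0)"
    using dPhi[OF assms(1) b] by simp
  consider "wl w i" "wl w (Suc (Suc i))" | "i = 0" "wl w (Suc (Suc i))" | "wl w i" "\<not> Suc (Suc i) < length w"
    using assms(2) unfolding DC_def by blast
  then show ?thesis
  proof cases
    case 1
    then show ?thesis unfolding e using l1 l2 l0[of "Suc (Suc i)"] w2 by simp
  next
    case 2
    then show ?thesis unfolding e using l2 w2 by (simp add: wl_def)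
  next
    case 3
    then show ?thesis unfolding e using l1 by simp
  qed
qed



lemma tele_gen:
  fixes B P :: "nat \<Rightarrow> int"
  assumes "B 0 = 0" "B n = 0" "\<And>k. B k = 0 \<or> B k = 1"
    and "\<And>k. B k = 1 \<Longrightarrow> B (Suc k) = 1 \<Longrightarrow> P k \<le> P (Suc k)"
  shows "(\<Sum>k<n. P k * B k * (B (Suc k) - B (k - 1))) \<le> 0"
proof (cases n)
  case 0 then show ?thesis by simp
next
  case (Suc m)
  have s1: "(\<Sum>k<n. P k * B k * B (Suc k)) = (\<Sum>j<m. P j * B j * B (Suc j))"
    using Suc assms(2) by simp
  have s2: "(\<Sum>k<n. P k * B k * B (k - 1)) = (\<Sum>j<m. P (Suc j) * B (Suc j) * B j)"
    unfolding Suc sum.lessThan_Suc_shift using assms(1) by simp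
  have "(\<Sum>k<n. P k * B k * (B (Suc k) - B (k - 1)))
      = (\<Sum>k<n. P k * B k * B (Suc k)) - (\<Sum>k<n. P k * B k * B (k - 1))"
    by (simp add: sum_subtractf right_diff_distrib)
  also have "\<dots> = (\<Sum>j<m. B j * B (Suc j) * (P j - P (Suc j)))"
    unfolding s1 s2 by (simp add: sum_subtractf[symmetric] algebra_simps)
  also have "\<dots> \<le> 0"
  proof (rule sum_nonpos)
    fix j assume "j \<in> {..<m}"
    show "B j * B (Suc j) * (P j - P (Suc j)) \<le> 0"
      using assms(3)[of j] assms(3)[of "Suc j"] assms(4)[of j] by auto
  qed
  finally show ?thesis .
qed

lemma shift2: fixes f :: "nat \<Rightarrow> int" and n :: nat shows "(\<Sum>k<n. if 2 \<le> k then f (k - 2) else (0::int)) = (\<Sum>i<n - 2. f i)"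
proof (induction n)
  case 0 then show ?case by simp
next
  case (Suc n)
  show ?case
  proof (cases "2 \<le> n")
    case True
    then have "Suc n - 2 = Suc (n - 2)" by simp
    then show ?thesis using Suc True by simp
  next
    case False
    then have "Suc n - 2 = 0" by simp
    moreover have "(\<Sum>k<Suc n. if 2 \<le> k then f (k - 2) else (0::int)) = 0"
      using False by (intro sum.neutral) auto
    ultimately show ?thesis by simp
  qed
qed

lemma sum_lt_sub2:
  fixes f :: "nat \<Rightarrow> int"
  assumes "\<And>i. n - 2 \<le> i \<Longrightarrow> i < n \<Longrightarrow> f i = 0"
  shows "(\<Sum>i<n - 2. f i) = (\<Sum>i<n. f i)"
  by (rule sum.mono_neutral_left) (use assms in auto)

lemma sum_lt_sub2_le:
  fixes f :: "nat \<Rightarrow> int"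
  assumes "\<And>i. 0 \<le> f i"
  shows "(\<Sum>i<n - 2. f i) \<le> (\<Sum>i<n. f i)"
  by (rule sum_mono2) (use assms in auto)



lemma PP_last:
  assumes "w \<in> configs m" "wl w (length w - 1)"
  shows "PP w (length w - 1) = -2"
proof -
  define k where "k = length w - 1"
  have k: "0 < k" "Suc k = length w" using assms(2) unfolding wl_def k_def by auto
  have "hh w (Suc k) = 0" using hh_len[OF assms(1)] k by simp
  then have h: "hh w k = - cv (w!k)" by (simp add: hh_Suc)
  have t: "tt w k = -1" unfolding tt_def h using cv_sq[of "w!k"] by simp
  have "PP w k = 2 * int k - 2 * int (length w)" unfolding PP_def t pp_def by simp
  also have "\<dots> = -2" using k by simp
  finally show ?thesis unfolding k_def .
qed

lemma PP_first:
  assumes "wl w 1"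
  shows "PP w 1 = 2"
proof -
  have e: "w!0 = w!1" using assms unfolding wl_def by simp
  have "hh w 1 = cv (w!0)" by (simp add: hh_def)
  then have t: "tt w 1 = 1" unfolding tt_def e using cv_sq[of "w!1"] by simp
  show ?thesis unfolding PP_def t pp_def by simp
qed

lemma PP_bd:
  assumes "k \<le> length w"
  shows "-2 * int (length w) \<le> PP w k \<and> PP w k \<le> 2 * int (length w)"
  unfolding PP_def using pp_bounds[of "int k" "int (length w)"] assms by simp

lemma PP_mono:
  assumes "wl w k" "wl w (Suc k)"
  shows "PP w k \<le> PP w (Suc k)"
proof -
  have e: "w!(Suc k) = w!k" using assms(2) unfolding wl_def by simp
  have "tt w (Suc k) = tt w k + 1"
    unfolding tt_def hh_Suc e using cv_sq[of "w!k"] by (simp add: algebra_simps)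
  then have "PP w (Suc k) = pp (int (length w)) (tt w k + 1) (int k + 1)"
    unfolding PP_def by (simp add: add.commute)
  then show ?thesis unfolding PP_def using pp_mono[of "int (length w)" "tt w k" "int k"] by simp
qed

lemma pt_b:
  assumes "w \<in> configs m" "k < length w"
  shows "(if ZR w k then -2 * PP w k else 0)
     \<le> (if wl w k \<and> \<not> wl w (Suc k) then -2 * PP w k else 0) + (if DC w k then 4 * int (length w) else 0)"
proof (cases "ZR w k")
  case True
  then have "wl w k" "Suc k < length w" "w!k \<noteq> w!Suc k" unfolding ZR_def by auto
  then have "\<not> wl w (Suc k)" unfolding wl_def by simp
  then show ?thesis using True \<open>wl w k\<close> by simp
next
  case False
  show ?thesis
  proof (cases "wl w k \<and> \<not> wl w (Suc k)")
    case False2: False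
    have "(if wl w k \<and> \<not> wl w (Suc k) then -2 * PP w k else 0) = 0" by (rule if_not_P[OF False2])
    then show ?thesis using False by simp
  next
    case True
    then have wk: "wl w k" and nk: "\<not> wl w (Suc k)" by auto
    show ?thesis
    proof (cases "Suc k < length w")
      case True
      then have ne: "w!k \<noteq> w!Suc k" using nk unfolding wl_def by simp
      have "DC w k" using False True ne wk unfolding ZR_def DC_def by blast
      then show ?thesis using PP_bd[of k w] assms(2) wk nk by simp
    next
      case False3: False
      then have "k = length w - 1" using assms(2) by simp
      then have "PP w k = -2" using PP_last[OF assms(1)] wk by simp
      then show ?thesis using wk nk by simp
    qed
  qed
qed

lemma pt_c:
  assumes "w \<in> configs m" "k < length w"
  shows "(if 2 \<le> k then (if ZL w (k - 2) then 2 * PP w k else 0) else 0)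
     \<le> (if wl w k \<and> \<not> wl w (k - 1) then 2 * PP w k else 0)
       + (if 2 \<le> k then (if DC w (k - 2) then 4 * int (length w) else 0) else 0)"
proof (cases "2 \<le> k \<and> ZL w (k - 2)")
  case True
  have z: "ZL w (k-2)" "2 \<le> k" using True by auto
  have k2: "Suc (Suc (k - 2)) = k" using z(2) by arith
  have "wl w (Suc (Suc (k-2)))" "w!(k-2) \<noteq> w!Suc (k-2)" using z(1) unfolding ZL_def by auto
  then have "wl w k" "w!(k-2) \<noteq> w!Suc (k-2)" unfolding k2 by auto
  moreover have e1: "k - 1 = Suc (k-2)" using z(2) by arith
  ultimately have "wl w k" "\<not> wl w (Suc (k-2))" unfolding wl_def by auto
  then have "wl w k" "\<not> wl w (k-1)" unfolding e1 by auto
  then show ?thesis using z by simp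
next
  case False
  show ?thesis
  proof (cases "wl w k \<and> \<not> wl w (k - 1)")
    case False2: False
    have "(if wl w k \<and> \<not> wl w (k - 1) then 2 * PP w k else 0) = 0" by (rule if_not_P[OF False2])
    then show ?thesis using False by simp
  next
    case True
    then have wk: "wl w k" and nk: "\<not> wl w (k - 1)" by auto
    have k0: "0 < k" using wk unfolding wl_def by simp
    show ?thesis
    proof (cases "k = 1")
      case True
      then show ?thesis using PP_first wk nk by simp
    next
      case False4: False
      then have k2: "2 \<le> k" using k0 by simp
      define i where "i = k - 2"
      have ik: "Suc (Suc i) = k" "Suc i = k - 1" using k2 unfolding i_def by auto
      have s: "Suc i < length w" using ik assms(2) by simp
      have ne: "w!i \<noteq> w!Suc i"
      proof -
        have "0 < k - 1" "k - 1 < length w" using k2 assms(2) by auto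
        then have "w!(k-1-1) \<noteq> w!(k-1)" using nk unfolding wl_def by blast
        moreover have "k - 1 - 1 = i" using k2 unfolding i_def by simp
        ultimately show ?thesis using ik by simp
      qed
      have "\<not> ZL w i" using False k2 unfolding i_def by simp
      then have "DC w i" using s ne wk ik unfolding ZL_def DC_def by auto
      then show ?thesis using PP_bd[of k w] assms(2) wk nk k2 unfolding i_def by simp
    qed
  qed
qed



lemma excl:
  "ZR w i \<Longrightarrow> \<not> ZL w i" "ZR w i \<Longrightarrow> \<not> DC w i" "ZL w i \<Longrightarrow> \<not> DC w i"
  unfolding ZR_def ZL_def DC_def wl_def by auto

lemma cls_lt: "ZR w i \<Longrightarrow> i < length w" "ZL w i \<Longrightarrow> i < length w" "DC w i \<Longrightarrow> i < length w"
  unfolding ZR_def ZL_def DC_def by auto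

lemma drift_int:
  assumes cw: "w \<in> configs m" and n9: "9 \<le> length w"
  shows "(\<Sum>i\<in>allowed_flips w. Phi (flip w i) - Phi w) \<le> -4 * int (card (allowed_flips w))"
proof -
  define n where "n = length w"
  define A where "A = allowed_flips w"
  define D where "D i = Phi (flip w i) - Phi w" for i
  define B where "B k = (if wl w k then 1 else 0 :: int)" for k
  have A_eq: "A = {i\<in>{..<n}. ZR w i \<or> ZL w i \<or> DC w i}"
  proof -
    have "\<And>i. i \<in> allowed_flips w \<longleftrightarrow> ZR w i \<or> ZL w i \<or> DC w i"
      using allowed_iff[OF cw] n9 by simp
    then show ?thesis unfolding A_def n_def using cls_lt by blast
  qed
  have finA: "finite A" unfolding A_eq by simp
  have sumA: "(\<Sum>i\<in>A. D i + 4) = (\<Sum>i<n. (if ZR w i then D i + 4 else 0)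
      + (if ZL w i then D i + 4 else 0) + (if DC w i then D i + 4 else 0))"
  proof -
    have "(\<Sum>i\<in>A. D i + 4) = (\<Sum>i<n. if ZR w i \<or> ZL w i \<or> DC w i then D i + 4 else 0)"
      unfolding A_eq by (rule sum.inter_filter) simp
    also have "\<dots> = (\<Sum>i<n. (if ZR w i then D i + 4 else 0)
      + (if ZL w i then D i + 4 else 0) + (if DC w i then D i + 4 else 0))"
    proof (rule sum.cong)
      fix i show "(if ZR w i \<or> ZL w i \<or> DC w i then D i + 4 else 0) = (if ZR w i then D i + 4 else 0)
      + (if ZL w i then D i + 4 else 0) + (if DC w i then D i + 4 else 0)"
        using excl[of w i] by (cases "ZR w i"; cases "ZL w i"; cases "DC w i") simp_all
    qed simp
    finally show ?thesis .
  qed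
  have pt: "(if ZR w i then D i + 4 else 0) + (if ZL w i then D i + 4 else 0) + (if DC w i then D i + 4 else 0)
     \<le> (if ZR w i then -2 * PP w i else 0) + (if ZL w i then 2 * PP w (Suc (Suc i)) else 0)
       + (if DC w i then 4 - (int n)^2 else 0)" for i
    using dPhi_ZR[OF cw, of i] dPhi_ZL[OF cw, of i] dPhi_DC[OF cw, of i]
    unfolding D_def n_def by auto
  define S1 where "S1 = (\<Sum>i<n. if ZR w i then -2 * PP w i else 0)"
  define S2 where "S2 = (\<Sum>i<n. if ZL w i then 2 * PP w (Suc (Suc i)) else 0)"
  define SD where "SD = (\<Sum>i<n. if DC w i then 4 * int n else 0)"
  define SL where "SL = (\<Sum>k<n. if wl w k \<and> \<not> wl w (k - 1) then 2 * PP w k else 0)"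
  define SR where "SR = (\<Sum>k<n. if wl w k \<and> \<not> wl w (Suc k) then -2 * PP w k else 0)"
  have h1: "S1 \<le> SR + SD"
    unfolding S1_def SR_def SD_def sum.distrib[symmetric]
    by (rule sum_mono) (metis pt_b[OF cw] lessThan_iff n_def)
  have h2: "S2 \<le> SL + SD"
  proof -
    have "S2 = (\<Sum>i<n - 2. if ZL w i then 2 * PP w (Suc (Suc i)) else 0)"
      unfolding S2_def by (rule sum_lt_sub2[symmetric]) (auto simp: ZL_def wl_def n_def)
    also have "\<dots> = (\<Sum>k<n. if 2 \<le> k then (if ZL w (k - 2) then 2 * PP w (Suc (Suc (k - 2))) else 0) else 0)"
      by (rule shift2[symmetric])
    also have "\<dots> = (\<Sum>k<n. if 2 \<le> k then (if ZL w (k - 2) then 2 * PP w k else 0) else 0)"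
    proof (rule sum.cong)
      fix k assume "k \<in> {..<n}"
      show "(if 2 \<le> k then (if ZL w (k - 2) then 2 * PP w (Suc (Suc (k - 2))) else 0) else 0)
          = (if 2 \<le> k then (if ZL w (k - 2) then 2 * PP w k else 0) else 0)"
      proof (cases "2 \<le> k")
        case True then have "Suc (Suc (k - 2)) = k" by arith
        then show ?thesis by simp
      qed simp
    qed simp
    also have "\<dots> \<le> SL + (\<Sum>k<n. if 2 \<le> k then (if DC w (k - 2) then 4 * int n else 0) else 0)"
      unfolding SL_def sum.distrib[symmetric]
      by (rule sum_mono) (metis pt_c[OF cw] lessThan_iff n_def)
    also have "(\<Sum>k<n. if 2 \<le> k then (if DC w (k - 2) then 4 * int n else 0) else 0)
        = (\<Sum>i<n - 2. if DC w i then 4 * int n else 0)"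
      by (rule shift2)
    also have "\<dots> \<le> SD" unfolding SD_def by (rule sum_lt_sub2_le) simp
    finally show ?thesis by simp
  qed
  have tele: "SL + SR \<le> 0"
  proof -
    have "SL + SR = 2 * (\<Sum>k<n. PP w k * B k * (B (Suc k) - B (k - 1)))"
      unfolding SL_def SR_def sum.distrib[symmetric] sum_distrib_left
      by (rule sum.cong) (auto simp: B_def)
    also have "\<dots> \<le> 0"
    proof -
      have "(\<Sum>k<n. PP w k * B k * (B (Suc k) - B (k - 1))) \<le> 0"
        by (rule tele_gen) (auto simp: B_def wl_def n_def intro: PP_mono split: if_splits)
      then show ?thesis by simp
    qed
    finally show ?thesis .
  qed
  have total: "(\<Sum>i\<in>A. D i + 4) \<le> 0"
  proof -
    have "(\<Sum>i\<in>A. D i + 4) \<le> (\<Sum>i<n. (if ZR w i then -2 * PP w i else 0) + (if ZL w i then 2 * PP w (Suc (Suc i)) else 0)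
       + (if DC w i then 4 - (int n)^2 else 0))"
      unfolding sumA by (rule sum_mono) (rule pt)
    also have "\<dots> = S1 + S2 + (\<Sum>i<n. if DC w i then 4 - (int n)^2 else 0)"
      unfolding S1_def S2_def sum.distrib ..
    also have "\<dots> \<le> SR + SD + SL + SD + (\<Sum>i<n. if DC w i then 4 - (int n)^2 else 0)"
      using h1 h2 by simp
    also have "\<dots> \<le> 2 * SD + (\<Sum>i<n. if DC w i then 4 - (int n)^2 else 0)"
      using tele by simp
    also have "\<dots> = (\<Sum>i<n. if DC w i then 8 * int n + 4 - (int n)^2 else 0)"
      unfolding SD_def sum_distrib_left sum.distrib[symmetric]
    proof (rule sum.cong)
      fix i show "2 * (if DC w i then 4 * int n else 0) + (if DC w i then 4 - (int n)\<^sup>2 else 0) =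
         (if DC w i then 8 * int n + 4 - (int n)\<^sup>2 else 0)" by (cases "DC w i") simp_all
    qed simp
    also have "\<dots> \<le> 0"
    proof (rule sum_nonpos)
      fix i
      have "9 \<le> int n" using n9 n_def by simp
      then have q: "9 * int n \<le> int n * int n" using mult_right_mono[of 9 "int n" "int n"] by simp
      have "8 * int n + 4 - (int n)^2 \<le> 0" using q \<open>9 \<le> int n\<close> unfolding power2_eq_square by linarith
      then show "(if DC w i then 8 * int n + 4 - (int n)^2 else 0) \<le> 0" by simp
    qed
    finally show ?thesis .
  qed
  have "(\<Sum>i\<in>A. D i) = (\<Sum>i\<in>A. D i + 4) - 4 * int (card A)"
    by (simp add: sum.distrib)
  then show ?thesis using total unfolding A_def D_def by simp
qed



definition alive :: "nat list list \<Rightarrow> bool" where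
  "alive p = (\<forall>v\<in>set p. mismatches v \<noteq> 0)"

lemma finite_allowed: "finite (allowed_flips v)"
  by (rule finite_subset[of _ "{..<length v}"]) (auto simp: allowed_flips_def)

lemma set_cool_step:
  assumes "mismatches v \<noteq> 0" "allowed_flips v \<noteq> {}"
  shows "set_pmf (cool_step v) = flip v ` allowed_flips v"
  using assms finite_allowed by (simp add: cool_step_def)

lemma set_cool_step0:
  assumes "mismatches v = 0"
  shows "set_pmf (cool_step v) = {v}"
  using assms by (simp add: cool_step_def)

lemma traj_support:
  assumes pres: "\<And>v i. v \<in> S \<Longrightarrow> mismatches v \<noteq> 0 \<Longrightarrow> i \<in> allowed_flips v \<Longrightarrow> flip v i \<in> S"
    and ne: "\<And>v. v \<in> S \<Longrightarrow> mismatches v \<noteq> 0 \<Longrightarrow> allowed_flips v \<noteq> {}"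
    and w: "w \<in> S"
  shows "finite (set_pmf (traj t w)) \<and> (\<forall>p\<in>set_pmf (traj t w). p \<noteq> [] \<and> set p \<subseteq> S)"
proof (induction t)
  case 0
  then show ?case using w by simp
next
  case (Suc t)
  have cs: "finite (set_pmf (cool_step v)) \<and> set_pmf (cool_step v) \<subseteq> S" if "v \<in> S" for v
  proof (cases "mismatches v = 0")
    case True then show ?thesis using that by (simp add: set_cool_step0)
  next
    case False then show ?thesis using that ne[OF that False] pres[OF that False]
      by (auto simp: set_cool_step finite_allowed)
  qed
  have "set_pmf (traj (Suc t) w) = (\<Union>p\<in>set_pmf (traj t w). (\<lambda>v. p @ [v]) ` set_pmf (cool_step (last p)))"
    by (simp add: set_bind_pmf)
  moreover have "last p \<in> S" if "p \<in> set_pmf (traj t w)" for p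
    using Suc.IH that last_in_set by blast
  ultimately show ?case using Suc.IH cs by auto
qed

lemma exp_bound:
  fixes \<Psi> :: "nat list \<Rightarrow> real"
  assumes pres: "\<And>v i. v \<in> S \<Longrightarrow> mismatches v \<noteq> 0 \<Longrightarrow> i \<in> allowed_flips v \<Longrightarrow> flip v i \<in> S"
    and ne: "\<And>v. v \<in> S \<Longrightarrow> mismatches v \<noteq> 0 \<Longrightarrow> allowed_flips v \<noteq> {}"
    and drift: "\<And>v. v \<in> S \<Longrightarrow> mismatches v \<noteq> 0 \<Longrightarrow>
        (\<Sum>i\<in>allowed_flips v. \<Psi> (flip v i)) \<le> real (card (allowed_flips v)) * (\<Psi> v - 1)"
    and nonneg: "\<And>v. v \<in> S \<Longrightarrow> 0 \<le> \<Psi> v"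
    and w: "w \<in> S"
  shows "exp_conv_time w \<le> ennreal (\<Psi> w)"
proof -
  define f where "f p = (if alive p then \<Psi> (last p) else 0)" for p
  define G where "G t = measure_pmf.expectation (traj t w) f" for t
  note supp = traj_support[OF pres ne w]
  have lastS: "last p \<in> S" if "p \<in> set_pmf (traj t w)" for p t
  proof -
    have "p \<noteq> []" "set p \<subseteq> S" using supp[of t] that by auto
    then show ?thesis using last_in_set by blast
  qed
  have G_sum: "G t = (\<Sum>a\<in>set_pmf (traj t w). f a * pmf (traj t w) a)" for t
    unfolding G_def by (rule integral_measure_pmf_real) (use supp in auto)
  have surv_sum: "surv w t = (\<Sum>a\<in>set_pmf (traj t w). (if alive a then pmf (traj t w) a else 0))" for t
  proof -
    have "surv w t = measure_pmf.prob (traj t w) ({p. alive p} \<inter> set_pmf (traj t w))"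
      unfolding surv_def alive_def by (simp add: measure_Int_set_pmf)
    also have "\<dots> = sum (pmf (traj t w)) ({p. alive p} \<inter> set_pmf (traj t w))"
      using supp by (intro measure_measure_pmf_finite) auto
    also have "\<dots> = (\<Sum>a\<in>set_pmf (traj t w). (if alive a then pmf (traj t w) a else 0))"
      using supp by (simp add: sum.If_cases Int_commute)
    finally show ?thesis .
  qed
  have fnn: "0 \<le> f p" if "p \<in> set_pmf (traj t w)" for p t
  proof -
    have "p \<noteq> []" "set p \<subseteq> S" using supp[of t] that by auto
    then have "last p \<in> S" using last_in_set by blast
    then show ?thesis using nonneg unfolding f_def by auto
  qed
  have Gnn: "0 \<le> G t" for t
    unfolding G_sum by (intro sum_nonneg) (simp add: fnn)
  have inner: "measure_pmf.expectation (cool_step (last a)) (\<lambda>v. f (a @ [v]))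
      \<le> (if alive a then \<Psi> (last a) - 1 else 0)" if a: "a \<in> set_pmf (traj t w)" for a t
  proof (cases "alive a")
    case False
    then have "(\<lambda>v. f (a @ [v])) = (\<lambda>v. 0)" unfolding f_def alive_def by (intro ext) auto
    then show ?thesis using False by simp
  next
    case True
    have aS: "a \<noteq> []" "set a \<subseteq> S" using supp a by auto
    then have vS: "last a \<in> S" by auto
    have mm: "mismatches (last a) \<noteq> 0" using True aS unfolding alive_def by auto
    define v where "v = last a"
    define A where "A = allowed_flips v"
    have An: "A \<noteq> {}" "finite A" using ne vS mm finite_allowed unfolding A_def v_def by auto
    have "measure_pmf.expectation (cool_step v) (\<lambda>u. f (a @ [u]))
        = measure_pmf.expectation (pmf_of_set A) (\<lambda>i. f (a @ [flip v i]))"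
      using mm unfolding cool_step_def A_def v_def by (simp add: integral_map_pmf)
    also have "\<dots> = (\<Sum>i\<in>A. f (a @ [flip v i])) / real (card A)"
      using An by (simp add: integral_pmf_of_set)
    also have "\<dots> \<le> (\<Sum>i\<in>A. \<Psi> (flip v i)) / real (card A)"
    proof -
      have "f (a @ [flip v i]) \<le> \<Psi> (flip v i)" if "i \<in> A" for i
        using pres[OF vS[folded v_def] mm[folded v_def]] that nonneg unfolding A_def f_def
        by auto
      then show ?thesis by (intro divide_right_mono sum_mono) auto
    qed
    also have "\<dots> \<le> \<Psi> v - 1"
      using drift[OF vS[folded v_def] mm[folded v_def]] An
      by (simp add: A_def divide_le_eq card_gt_0_iff mult.commute)
    finally show ?thesis using True v_def by simp
  qed
  have step: "surv w t + G (Suc t) \<le> G t" for t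
  proof -
    let ?A = "set_pmf (traj t w)"
    have "G (Suc t) = (\<Sum>a\<in>?A. pmf (traj t w) a *\<^sub>R
        measure_pmf.expectation (map_pmf (\<lambda>v. a @ [v]) (cool_step (last a))) f)"
      unfolding G_def traj.simps
    proof (rule pmf_expectation_bind)
      show "finite ?A" using supp by auto
      fix x assume x: "x \<in> ?A"
      have xS: "last x \<in> S" using lastS x by auto
      show "finite (set_pmf (map_pmf (\<lambda>v. x @ [v]) (cool_step (last x))))"
      proof (cases "mismatches (last x) = 0")
        case True then show ?thesis by (simp add: set_cool_step0)
      next
        case False then show ?thesis using ne[OF xS False] by (simp add: set_cool_step finite_allowed)
      qed
    qed auto
    also have "\<dots> = (\<Sum>a\<in>?A. pmf (traj t w) a *
        measure_pmf.expectation (cool_step (last a)) (\<lambda>v. f (a @ [v])))"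
      by (simp add: integral_map_pmf)
    also have "\<dots> \<le> (\<Sum>a\<in>?A. pmf (traj t w) a * (if alive a then \<Psi> (last a) - 1 else 0))"
      by (intro sum_mono mult_left_mono inner) auto
    also have "\<dots> = G t - surv w t"
      unfolding G_sum surv_sum f_def
      by (simp add: sum_subtractf[symmetric] algebra_simps if_distrib cong: if_cong)
    finally show ?thesis by simp
  qed
  have main: "(\<Sum>s<t. surv w s) + G t \<le> \<Psi> w" for t
  proof (induction t)
    case 0
    have "G 0 = f [w]" unfolding G_def by simp
    then show ?case using nonneg[OF w] by (simp add: f_def)
  next
    case (Suc t)
    then show ?case using step[of t] by simp
  qed
  have partial: "(\<Sum>s<t. surv w s) \<le> \<Psi> w" for t
    using main[of t] Gnn[of t] by linarith
  have snn: "0 \<le> surv w t" for t unfolding surv_def by simp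
  have "exp_conv_time w = (\<Squnion>t. \<Sum>s<t. ennreal (surv w s))"
    unfolding exp_conv_time_def by (rule suminf_eq_SUP)
  also have "\<dots> \<le> ennreal (\<Psi> w)"
  proof (rule SUP_least)
    fix t
    have "(\<Sum>s<t. ennreal (surv w s)) = ennreal (\<Sum>s<t. surv w s)"
      using snn by (simp add: sum_ennreal)
    then show "(\<Sum>s<t. ennreal (surv w s)) \<le> ennreal (\<Psi> w)"
      using partial[of t] by (simp add: ennreal_leI)
  qed
  finally show ?thesis .
qed



lemma left_run:
  "wl w k \<Longrightarrow> (\<exists>j. Suc (Suc j) \<le> k \<and> w!j \<noteq> w!Suc j \<and> wl w (Suc (Suc j))) \<or> (\<forall>m\<le>k. w!m = w!k)"
proof (induction k)
  case 0 then show ?case by (simp add: wl_def)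
next
  case (Suc k)
  have e: "w!k = w!Suc k" "Suc k < length w" using Suc.prems unfolding wl_def by auto
  show ?case
  proof (cases "k = 0")
    case True
    then have "\<forall>m\<le>Suc k. w!m = w!Suc k" using e by (auto simp: le_Suc_eq)
    then show ?thesis by blast
  next
    case False
    show ?thesis
    proof (cases "w!(k-1) = w!k")
      case False2: False
      have "Suc (Suc (k-1)) = Suc k" "Suc (k-1) = k" using False by auto
      then have "Suc (Suc (k-1)) \<le> Suc k \<and> w!(k-1) \<noteq> w!Suc (k-1) \<and> wl w (Suc (Suc (k-1)))"
        using False2 Suc.prems by simp
      then show ?thesis by blast
    next
      case True
      then have "wl w k" using False e unfolding wl_def by simp
      from Suc.IH[OF this] show ?thesis
      proof
        assume "\<exists>j. Suc (Suc j) \<le> k \<and> w!j \<noteq> w!Suc j \<and> wl w (Suc (Suc j))"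
        then show ?thesis by (meson le_Suc_eq)
      next
        assume a: "\<forall>m\<le>k. w!m = w!k"
        have "\<forall>m\<le>Suc k. w!m = w!Suc k"
        proof (intro allI impI)
          fix m assume "m \<le> Suc k"
          then consider "m \<le> k" | "m = Suc k" by linarith
          then show "w!m = w!Suc k" using a e by cases auto
        qed
        then show ?thesis by blast
      qed
    qed
  qed
qed

lemma right_run:
  "wl w k \<Longrightarrow> (\<exists>j. k \<le> j \<and> Suc j < length w \<and> w!j \<noteq> w!Suc j \<and> wl w j)
      \<or> (\<forall>m. k \<le> m \<longrightarrow> m < length w \<longrightarrow> w!m = w!k)"
proof (induction "length w - k" arbitrary: k rule: less_induct)
  case less
  have k: "0 < k" "k < length w" using less.prems unfolding wl_def by auto
  show ?case
  proof (cases "Suc k < length w")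
    case False
    have "m = k" if "k \<le> m" "m < length w" for m using that False by linarith
    then have "\<forall>m. k \<le> m \<longrightarrow> m < length w \<longrightarrow> w!m = w!k" by blast
    then show ?thesis by blast
  next
    case True
    show ?thesis
    proof (cases "w!k = w!Suc k")
      case False
      then show ?thesis using True less.prems by blast
    next
      case eq: True
      then have "wl w (Suc k)" using True unfolding wl_def by simp
      from less.hyps[OF _ this] True have
        "(\<exists>j. Suc k \<le> j \<and> Suc j < length w \<and> w!j \<noteq> w!Suc j \<and> wl w j)
         \<or> (\<forall>m. Suc k \<le> m \<longrightarrow> m < length w \<longrightarrow> w!m = w!Suc k)" by simp
      then show ?thesis
      proof
        assume "\<exists>j. Suc k \<le> j \<and> Suc j < length w \<and> w!j \<noteq> w!Suc j \<and> wl w j"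
        then show ?thesis by (meson Suc_leD)
      next
        assume a: "\<forall>m. Suc k \<le> m \<longrightarrow> m < length w \<longrightarrow> w!m = w!Suc k"
        have "\<forall>m. k \<le> m \<longrightarrow> m < length w \<longrightarrow> w!m = w!k"
        proof (intro allI impI)
          fix m assume m: "k \<le> m" "m < length w"
          then consider "m = k" | "Suc k \<le> m" by linarith
          then show "w!m = w!k"
          proof cases
            case 2
            then have "w!m = w!Suc k" using a m(2) by blast
            then show ?thesis using eq by simp
          qed simp
        qed
        then show ?thesis by blast
      qed
    qed
  qed
qed

lemma count_const:
  assumes "set w \<subseteq> {c}"
  shows "count_list w c = length w" "d \<noteq> c \<Longrightarrow> count_list w d = 0"
  using assms by (induction w) auto

lemma nonempty:
  assumes cw: "w \<in> configs m" and n3: "3 \<le> length w" and mm: "mismatches w \<noteq> 0"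
  shows "allowed_flips w \<noteq> {}"
proof -
  obtain i where i: "Suc i < length w" "w!i = w!Suc i"
    using mm unfolding mismatches_def by (metis (mono_tags, lifting) Collect_empty_eq card.empty)
  define k where "k = Suc i"
  have wk: "wl w k" using i unfolding wl_def k_def by simp
  have ex: "\<exists>j. ZR w j \<or> ZL w j \<or> DC w j"
  proof (rule ccontr)
    assume no: "\<not> ?thesis"
    have L: "\<forall>m\<le>k. w!m = w!k"
    proof -
      { fix j assume j: "Suc (Suc j) \<le> k" "w!j \<noteq> w!Suc j" "wl w (Suc (Suc j))"
        have "Suc j < length w" using j(1) wk unfolding wl_def by simp
        then have "ZL w j \<or> DC w j" using j unfolding ZL_def DC_def by auto
        then have False using no by blast }
      then show ?thesis using left_run[OF wk] by blast
    qed
    have R: "\<forall>m. k \<le> m \<longrightarrow> m < length w \<longrightarrow> w!m = w!k"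
    proof -
      { fix j assume j: "k \<le> j" "Suc j < length w" "w!j \<noteq> w!Suc j" "wl w j"
        then have "ZR w j \<or> DC w j" unfolding ZR_def DC_def by blast
        then have False using no by blast }
      then show ?thesis using right_run[OF wk] by blast
    qed
    have all: "w!m = w!k" if "m < length w" for m
    proof (cases "m \<le> k")
      case True then show ?thesis using L by blast
    next
      case False then have "k \<le> m" by simp
      then show ?thesis using R that by blast
    qed
    have s: "set w \<subseteq> {w!k}"
    proof
      fix x assume "x \<in> set w"
      then obtain m where m: "m < length w" "x = w!m" by (metis in_set_conv_nth)
      have "w!m = w!k" by (rule all[OF m(1)])
      then show "x \<in> {w!k}" using m(2) by simp
    qed
    have kl: "k < length w" using wk unfolding wl_def by simp
    have "w!k = 1 \<or> w!k = 2" using configs_bin[OF cw kl] .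
    have ceq: "count_list w 1 = count_list w 2" using cw unfolding configs_def by simp
    obtain d where d: "d \<noteq> w!k" "count_list w (w!k) = count_list w d"
    proof (cases "w!k = 1")
      case True
      then show ?thesis using that[of 2] ceq by simp
    next
      case False
      then have "w!k = 2" using \<open>w!k = 1 \<or> w!k = 2\<close> by simp
      then show ?thesis using that[of 1] ceq by simp
    qed
    have "count_list w (w!k) = length w" "count_list w d = 0"
      using count_const[OF s] d(1) by simp_all
    then show False using d(2) n3 by simp
  qed
  then show ?thesis using allowed_iff[OF cw n3] by blast
qed

lemma Phi_bounds:
  shows "0 \<le> Phi w" "Phi w \<le> 3 * (int (length w))^3"
proof -
  have t: "0 \<le> (if wl w k then trm w k else 0) \<and> (if wl w k then trm w k else 0) \<le> 3 * (int (length w))^2"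
    if "k < length w" for k
  proof -
    have "(int (length w))^2 \<le> trm w k" "trm w k \<le> 3 * (int (length w))^2"
      using trm_lb[of k w] trm_ub[of k w] that by simp_all
    moreover have "0 \<le> (int (length w))^2" by simp
    ultimately show ?thesis by simp
  qed
  show "0 \<le> Phi w" unfolding Phi_def by (rule sum_nonneg) (use t in auto)
  have "Phi w \<le> (\<Sum>k<length w. 3 * (int (length w))^2)" unfolding Phi_def by (rule sum_mono) (use t in auto)
  also have "\<dots> = 3 * (int (length w))^3" by (simp add: power3_eq_cube power2_eq_square)
  finally show "Phi w \<le> 3 * (int (length w))^3" .
qed

theorem theorem1:
  shows "\<exists>C N. \<forall>n\<ge>N. \<forall>w\<in>configs n.
           exp_conv_time w \<le> ennreal (C * real n ^ 3)"
proof (intro exI allI impI ballI)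
  fix n w assume n: "9 \<le> n" and w: "w \<in> configs n"
  define \<Psi> where "\<Psi> v = real_of_int (Phi v) / 4" for v
  have len: "length v = n" if "v \<in> configs n" for v using that unfolding configs_def by simp
  have "exp_conv_time w \<le> ennreal (\<Psi> w)"
  proof (rule exp_bound[where S = "configs n"])
    fix v i assume v: "v \<in> configs n" "i \<in> allowed_flips v"
    then show "flip v i \<in> configs n" using flip_configs[OF v(1)] by (auto simp: allowed_flips_def)
  next
    fix v assume v: "v \<in> configs n" "mismatches v \<noteq> 0"
    then show "allowed_flips v \<noteq> {}" using nonempty[OF v(1)] len[OF v(1)] n by simp
  next
    fix v assume v: "v \<in> configs n" "mismatches v \<noteq> 0"
    define A where "A = allowed_flips v"
    have "(\<Sum>i\<in>A. Phi (flip v i) - Phi v) \<le> -4 * int (card A)"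
      unfolding A_def by (rule drift_int[OF v(1)]) (use len[OF v(1)] n in simp)
    then have "(\<Sum>i\<in>A. Phi (flip v i)) \<le> int (card A) * (Phi v - 4)"
      by (simp add: sum_subtractf algebra_simps)
    then have "real_of_int (\<Sum>i\<in>A. Phi (flip v i)) \<le> real_of_int (int (card A) * (Phi v - 4))"
      by (simp only: of_int_le_iff)
    then have "(\<Sum>i\<in>A. real_of_int (Phi (flip v i))) \<le> real (card A) * (real_of_int (Phi v) - 4)"
      by simp
    then show "(\<Sum>i\<in>allowed_flips v. \<Psi> (flip v i)) \<le> real (card (allowed_flips v)) * (\<Psi> v - 1)"
      unfolding \<Psi>_def A_def[symmetric] sum_divide_distrib[symmetric] by (simp add: algebra_simps)
  next
    fix v show "0 \<le> \<Psi> v" unfolding \<Psi>_def using Phi_bounds(1)[of v] by simp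
  qed (rule w)
  also have "\<dots> \<le> ennreal (1 * real n ^ 3)"
  proof (rule ennreal_leI)
    have "Phi w \<le> 3 * (int n)^3" using Phi_bounds(2)[of w] len[OF w] by simp
    then have "real_of_int (Phi w) \<le> real_of_int (3 * (int n)^3)" by (simp only: of_int_le_iff)
    then have "real_of_int (Phi w) \<le> 3 * real n ^ 3" by simp
    moreover have "0 \<le> real n ^ 3" by simp
    ultimately show "\<Psi> w \<le> 1 * real n ^ 3" unfolding \<Psi>_def by linarith
  qed
  finally show "exp_conv_time w \<le> ennreal (1 * real n ^ 3)" .
qed


end
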